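(* There is an absolute constant $C>0$ such that the following holds. Fix any $k\ge1$, any collection of $k$ groups with values in $[0,1]$, any target $q\in(0,1)$ and any step size $\eta\in(0,1]$. Running the Group Conditional ACI algorithm for $T$ rounds on any adversarial sequence $g_t\in[0,1]^k$, $\tau_t\in[0,1]$ yields, for every $i\in[k]$ with $T_i>0$, $$\left|\mathrm{Cov}(\Pi_T,G_i)-q\right|\le C\,\frac{\sqrt{\eta T(\eta k+1)}}{T_i\,\eta}.$$
   Context: Group Conditional ACI (GCACI) with coverage target $q$ and step size $\eta$: set $\theta_1=0\in\mathbb{R}^k$; at each round $t=1,\dots,T$ receive $g_t\in[0,1]^k$, predict $\hat\tau_t=\langle\theta_t,g_t\rangle$, receive $\tau_t\in[0,1]$; if $\hat\tau_t<\tau_t$ set $\theta_{t+1}=\theta_t+\eta q\,g_t$ (Update A), otherwise set $\theta_{t+1}=\theta_t-\eta(1-q)\,g_t$ (Update B). Here $g_{t,i}$ is the membership of round $t$ in group $G_i$; $T_i=\sum_{t=1}^T g_{t,i}$ and $\mathrm{Cov}(\Pi_T,G_i)=\frac{1}{T_i}\sum_{t=1}^T\mathbf{1}[\hat\tau_t\ge\tau_t]\,g_{t,i}$. *)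

theory Defs
  imports Complex_Main
begin

text \<open>Rounds are indexed t = 0,1,...,T-1 (paper: 1..T).
  Group memberships: g t j for j < k; vectors in R^k are functions nat => real,
  only coordinates j < k are relevant. theta at index t is the parameter used in round t
  (paper's theta_{t+1}); gcaci_theta ... 0 = 0.\<close>

fun gcaci_theta :: "nat \<Rightarrow> real \<Rightarrow> real \<Rightarrow> (nat \<Rightarrow> nat \<Rightarrow> real) \<Rightarrow> (nat \<Rightarrow> real) \<Rightarrow> nat \<Rightarrow> nat \<Rightarrow> real" where
  "gcaci_theta k q \<eta> g \<tau> 0 = (\<lambda>j. 0)"
| "gcaci_theta k q \<eta> g \<tau> (Suc t) =
     (let \<theta> = gcaci_theta k q \<eta> g \<tau> t;
          p = (\<Sum>j<k. \<theta> j * g t j)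
      in if p < \<tau> t then (\<lambda>j. \<theta> j + \<eta> * q * g t j)
         else (\<lambda>j. \<theta> j - \<eta> * (1 - q) * g t j))"

definition gcaci_pred :: "nat \<Rightarrow> real \<Rightarrow> real \<Rightarrow> (nat \<Rightarrow> nat \<Rightarrow> real) \<Rightarrow> (nat \<Rightarrow> real) \<Rightarrow> nat \<Rightarrow> real" where
  "gcaci_pred k q \<eta> g \<tau> t = (\<Sum>j<k. gcaci_theta k q \<eta> g \<tau> t j * g t j)"

definition group_count :: "(nat \<Rightarrow> nat \<Rightarrow> real) \<Rightarrow> nat \<Rightarrow> nat \<Rightarrow> real" where
  "group_count g T i = (\<Sum>t<T. g t i)"

definition gcaci_cov :: "nat \<Rightarrow> real \<Rightarrow> real \<Rightarrow> (nat \<Rightarrow> nat \<Rightarrow> real) \<Rightarrow> (nat \<Rightarrow> real) \<Rightarrow> nat \<Rightarrow> nat \<Rightarrow> real" where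
  "gcaci_cov k q \<eta> g \<tau> T i =
     (1 / group_count g T i) *
     (\<Sum>t<T. (if gcaci_pred k q \<eta> g \<tau> t \<ge> \<tau> t then 1 else 0) * g t i)"

end

theory Submission
  imports Defs
begin

lemma theta_formula:
  "gcaci_theta k q \<eta> g \<tau> t i =
     \<eta> * (q * (\<Sum>s<t. g s i) -
       (\<Sum>s<t. (if gcaci_pred k q \<eta> g \<tau> s \<ge> \<tau> s then 1 else 0) * g s i))"
proof (induction t)
  case 0
  then show ?case by simp
next
  case (Suc t)
  show ?case
  proof (cases "gcaci_pred k q \<eta> g \<tau> t < \<tau> t")
    case True
    then show ?thesis using Suc
      by (simp add: gcaci_pred_def Let_def algebra_simps)
  next
    case False
    then show ?thesis using Suc
      by (simp add: gcaci_pred_def Let_def algebra_simps)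
  qed
qed

lemma sq_expand:
  fixes a b :: "nat \<Rightarrow> real"
  shows "(\<Sum>j<k. (a j + c * b j)^2) = (\<Sum>j<k. (a j)^2) + 2 * c * (\<Sum>j<k. a j * b j) + c^2 * (\<Sum>j<k. (b j)^2)"
proof -
  have "(\<Sum>j<k. (a j + c * b j)^2) = (\<Sum>j<k. (a j)^2 + 2 * c * (a j * b j) + c^2 * (b j)^2)"
    by (rule sum.cong) (auto simp: power2_eq_square algebra_simps)
  also have "\<dots> = (\<Sum>j<k. (a j)^2) + 2 * c * (\<Sum>j<k. a j * b j) + c^2 * (\<Sum>j<k. (b j)^2)"
    by (simp add: sum.distrib sum_distrib_left)
  finally show ?thesis .
qed

lemma norm_bound:
  assumes q: "0 < q" "q < 1" and eta: "0 < \<eta>"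
    and gb: "\<forall>t<T. \<forall>j<k. 0 \<le> g t j \<and> g t j \<le> 1"
    and tb: "\<forall>t<T. 0 \<le> \<tau> t \<and> \<tau> t \<le> 1"
  shows "t \<le> T \<Longrightarrow> (\<Sum>j<k. (gcaci_theta k q \<eta> g \<tau> t j)^2) \<le> real t * (2 * \<eta> + \<eta>^2 * real k)"
proof (induction t)
  case 0
  then show ?case by simp
next
  case (Suc t)
  define th where "th = gcaci_theta k q \<eta> g \<tau> t"
  define p where "p = (\<Sum>j<k. th j * g t j)"
  have tT: "t < T" using Suc by simp
  have IH: "(\<Sum>j<k. (th j)^2) \<le> real t * (2 * \<eta> + \<eta>^2 * real k)"
    using Suc th_def by simp
  have G: "(\<Sum>j<k. (g t j)^2) \<le> real k"
  proof -
    have "(\<Sum>j<k. (g t j)^2) \<le> (\<Sum>j<k. (1::real))"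
      apply (rule sum_mono)
      using gb tT by (simp add: abs_square_le_1)
    then show ?thesis by simp
  qed
  have G0: "0 \<le> (\<Sum>j<k. (g t j)^2)" by (simp add: sum_nonneg)
  have tau: "0 \<le> \<tau> t" "\<tau> t \<le> 1" using tb tT by auto
  show ?case
  proof (cases "p < \<tau> t")
    case True
    have eq: "gcaci_theta k q \<eta> g \<tau> (Suc t) = (\<lambda>j. th j + (\<eta> * q) * g t j)"
      using True by (simp add: th_def p_def Let_def algebra_simps)
    have "(\<Sum>j<k. (gcaci_theta k q \<eta> g \<tau> (Suc t) j)^2)
        = (\<Sum>j<k. (th j)^2) + 2 * (\<eta> * q) * p + (\<eta> * q)^2 * (\<Sum>j<k. (g t j)^2)"
      unfolding eq p_def by (rule sq_expand)
    moreover have "2 * (\<eta> * q) * p \<le> 2 * \<eta>"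
    proof -
      have "p \<le> 1" using True tau by simp
      then have "q * p \<le> q * 1" using q by (intro mult_left_mono) auto
      then have "q * p \<le> 1" using q by linarith
      then show ?thesis using eta by (simp add: mult.assoc mult_left_le)
    qed
    moreover have "(\<eta> * q)^2 * (\<Sum>j<k. (g t j)^2) \<le> \<eta>^2 * real k"
    proof -
      have "(\<eta> * q)^2 \<le> \<eta>^2" using q eta
        by (simp add: power_mult_distrib power_le_one mult_left_le)
      then show ?thesis using G G0 by (intro mult_mono) auto
    qed
    moreover have "real (Suc t) * (2 * \<eta> + \<eta>^2 * real k) = real t * (2 * \<eta> + \<eta>^2 * real k) + (2 * \<eta> + \<eta>^2 * real k)"
      by (simp add: distrib_right)
    ultimately show ?thesis using IH by linarith
  next
    case False
    have eq: "gcaci_theta k q \<eta> g \<tau> (Suc t) = (\<lambda>j. th j + (- \<eta> * (1 - q)) * g t j)"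
      using False by (simp add: th_def p_def Let_def algebra_simps)
    have "(\<Sum>j<k. (gcaci_theta k q \<eta> g \<tau> (Suc t) j)^2)
        = (\<Sum>j<k. (th j)^2) + 2 * (- \<eta> * (1 - q)) * p + (- \<eta> * (1 - q))^2 * (\<Sum>j<k. (g t j)^2)"
      unfolding eq p_def by (rule sq_expand)
    moreover have "2 * (- \<eta> * (1 - q)) * p \<le> 0"
    proof -
      have "p \<ge> 0" using False tau by simp
      then show ?thesis using q eta by (simp add: mult_nonneg_nonneg)
    qed
    moreover have "(- \<eta> * (1 - q))^2 * (\<Sum>j<k. (g t j)^2) \<le> \<eta>^2 * real k"
    proof -
      have "(- \<eta> * (1 - q))^2 \<le> \<eta>^2" using q eta
        by (simp add: power_mult_distrib power_le_one mult_left_le)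
      then show ?thesis using G G0 by (intro mult_mono) auto
    qed
    moreover have "real (Suc t) * (2 * \<eta> + \<eta>^2 * real k) = real t * (2 * \<eta> + \<eta>^2 * real k) + (2 * \<eta> + \<eta>^2 * real k)"
      by (simp add: distrib_right)
    ultimately show ?thesis using IH eta by linarith
  qed
qed

theorem mainTheorem10:
  shows "\<exists>C::real. C > 0 \<and>
    (\<forall>(k::nat) (q::real) (\<eta>::real) (T::nat) (g::nat \<Rightarrow> nat \<Rightarrow> real) (\<tau>::nat \<Rightarrow> real).
       k \<ge> 1 \<longrightarrow> 0 < q \<longrightarrow> q < 1 \<longrightarrow> 0 < \<eta> \<longrightarrow> \<eta> \<le> 1 \<longrightarrow>
       (\<forall>t<T. \<forall>j<k. 0 \<le> g t j \<and> g t j \<le> 1) \<longrightarrow>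
       (\<forall>t<T. 0 \<le> \<tau> t \<and> \<tau> t \<le> 1) \<longrightarrow>
       (\<forall>i<k. group_count g T i > 0 \<longrightarrow>
          \<bar>gcaci_cov k q \<eta> g \<tau> T i - q\<bar>
            \<le> C * sqrt (\<eta> * real T * (\<eta> * real k + 1)) / (group_count g T i * \<eta>)))"
proof (rule exI[of _ 2], intro conjI allI impI)
  show "(0::real) < 2" by simp
next
  fix k :: nat and q \<eta> :: real and T :: nat and g :: "nat \<Rightarrow> nat \<Rightarrow> real" and \<tau> :: "nat \<Rightarrow> real" and i :: nat
  assume k: "k \<ge> 1" and q0: "0 < q" and q1: "q < 1" and e0: "0 < \<eta>" and e1: "\<eta> \<le> 1"
    and gb: "\<forall>t<T. \<forall>j<k. 0 \<le> g t j \<and> g t j \<le> 1"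
    and tb: "\<forall>t<T. 0 \<le> \<tau> t \<and> \<tau> t \<le> 1"
    and ik: "i < k" and Ti: "group_count g T i > 0"
  define Ti where "Ti = group_count g T i"
  define cnt where "cnt = (\<Sum>t<T. (if gcaci_pred k q \<eta> g \<tau> t \<ge> \<tau> t then 1 else 0) * g t i)"
  define th where "th = gcaci_theta k q \<eta> g \<tau> T"
  have thi: "th i = \<eta> * (q * Ti - cnt)"
    unfolding th_def Ti_def cnt_def group_count_def by (rule theta_formula)
  have cov: "gcaci_cov k q \<eta> g \<tau> T i - q = - th i / (Ti * \<eta>)"
  proof -
    have "gcaci_cov k q \<eta> g \<tau> T i = cnt / Ti"
      unfolding gcaci_cov_def Ti_def cnt_def by simp
    moreover have "Ti > 0" using Ti Ti_def by simp
    moreover have "cnt / Ti - q = - (\<eta> * (q * Ti - cnt)) / (Ti * \<eta>)"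
      using calculation(2) e0 by (simp add: field_simps)
    ultimately show ?thesis unfolding thi by simp
  qed
  have N: "(\<Sum>j<k. (th j)^2) \<le> real T * (2 * \<eta> + \<eta>^2 * real k)"
    unfolding th_def using norm_bound[OF q0 q1 e0 gb tb] by simp
  have sq: "(th i)^2 \<le> (\<Sum>j<k. (th j)^2)"
    using ik by (intro member_le_sum) auto
  have "(th i)^2 \<le> 2 * (\<eta> * real T * (\<eta> * real k + 1))"
  proof -
    have "0 \<le> \<eta>^2 * real T * real k" using e0 by simp
    moreover have "2 * (\<eta> * real T * (\<eta> * real k + 1)) = real T * (2 * \<eta> + \<eta>^2 * real k) + \<eta>^2 * real T * real k"
      by (simp add: algebra_simps power2_eq_square)
    ultimately show ?thesis using sq N by linarith
  qed
  then have "\<bar>th i\<bar> \<le> sqrt (2 * (\<eta> * real T * (\<eta> * real k + 1)))"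
    using real_le_rsqrt by (metis real_sqrt_abs real_sqrt_le_mono)
  also have "\<dots> \<le> 2 * sqrt (\<eta> * real T * (\<eta> * real k + 1))"
  proof -
    have "sqrt 2 \<le> 2" using sqrt2_less_2 by linarith
    moreover have "0 \<le> sqrt (\<eta> * real T * (\<eta> * real k + 1))" using e0 by simp
    ultimately have "sqrt 2 * sqrt (\<eta> * real T * (\<eta> * real k + 1)) \<le> 2 * sqrt (\<eta> * real T * (\<eta> * real k + 1))"
      by (rule mult_right_mono)
    then show ?thesis by (simp only: real_sqrt_mult)
  qed
  finally have A: "\<bar>th i\<bar> \<le> 2 * sqrt (\<eta> * real T * (\<eta> * real k + 1))" .
  have pos: "Ti * \<eta> > 0" using Ti e0 Ti_def by simp
  show "\<bar>gcaci_cov k q \<eta> g \<tau> T i - q\<bar>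
            \<le> 2 * sqrt (\<eta> * real T * (\<eta> * real k + 1)) / (group_count g T i * \<eta>)"
    unfolding cov Ti_def[symmetric] using A pos
    by (simp add: abs_divide divide_right_mono)
qed

end
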